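(* There exists an infinite sequence $\{(G_n,\tau_n)\}_{n\ge1}$ of finite simple graphs $G_n$ with threshold assignments $\tau_n$ such that $|G_n|\to\infty$, $\epsilon(G_n)/|G_n| = o(\overline{\tau_n})$, and $$\lim_{n\to\infty}\frac{Ldyn_{\overline{\tau_n}}(G_n)}{|G_n|}=1.$$
   Context: For a graph $G$, $|G|$ is the number of vertices and $\epsilon(G)=|E(G)|/|G|$. A threshold assignment is a function $\tau:V(G)\to\{0,1,2,\dots\}$ with $0\le\tau(v)\le deg_G(v)$ for all $v$; its average is $\overline{\tau}=\sum_v\tau(v)/|G|$. A set $D\subseteq V(G)$ is a $\tau$-dynamo if $V(G)$ can be partitioned into $D_0=D,D_1,\dots,D_k$ such that for each $1\le i\le k$, $D_i$ consists of all vertices not in $D_0\cup\dots\cup D_{i-1}$ having at least $\tau(v)$ neighbors in $D_0\cup\dots\cup D_{i-1}$; $dyn_\tau(G)$ is the minimum size of a $\tau$-dynamo. For $t>0$, $Ldyn_t(G)=\max\{dyn_\tau(G): \overline{\tau}\le t\}$. *)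

theory Defs
  imports Complex_Main "HOL-Library.Landau_Symbols"
begin

definition simple_graph :: "'a set \<Rightarrow> ('a \<Rightarrow> 'a \<Rightarrow> bool) \<Rightarrow> bool" where
  "simple_graph V E \<longleftrightarrow> finite V \<and> (\<forall>u v. E u v \<longrightarrow> u \<in> V \<and> v \<in> V)
     \<and> (\<forall>u v. E u v \<longrightarrow> E v u) \<and> (\<forall>v. \<not> E v v)"

definition degree :: "'a set \<Rightarrow> ('a \<Rightarrow> 'a \<Rightarrow> bool) \<Rightarrow> 'a \<Rightarrow> nat" where
  "degree V E v = card {u \<in> V. E v u}"

definition edge_set :: "'a set \<Rightarrow> ('a \<Rightarrow> 'a \<Rightarrow> bool) \<Rightarrow> 'a set set" where
  "edge_set V E = {{u, v} | u v. u \<in> V \<and> v \<in> V \<and> E u v}"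

definition eps :: "'a set \<Rightarrow> ('a \<Rightarrow> 'a \<Rightarrow> bool) \<Rightarrow> real" where
  "eps V E = real (card (edge_set V E)) / real (card V)"

definition threshold :: "'a set \<Rightarrow> ('a \<Rightarrow> 'a \<Rightarrow> bool) \<Rightarrow> ('a \<Rightarrow> nat) \<Rightarrow> bool" where
  "threshold V E \<tau> \<longleftrightarrow> (\<forall>v \<in> V. \<tau> v \<le> degree V E v)"

definition avg_thr :: "'a set \<Rightarrow> ('a \<Rightarrow> nat) \<Rightarrow> real" where
  "avg_thr V \<tau> = real (\<Sum>v\<in>V. \<tau> v) / real (card V)"

text \<open>One round of activation: D_0 \<union> ... \<union> D_{i-1} \<mapsto> D_0 \<union> ... \<union> D_i.\<close>
definition activate :: "'a set \<Rightarrow> ('a \<Rightarrow> 'a \<Rightarrow> bool) \<Rightarrow> ('a \<Rightarrow> nat) \<Rightarrow> 'a set \<Rightarrow> 'a set" where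
  "activate V E \<tau> A = A \<union> {v \<in> V - A. card {u \<in> A. E v u} \<ge> \<tau> v}"

definition is_dynamo :: "'a set \<Rightarrow> ('a \<Rightarrow> 'a \<Rightarrow> bool) \<Rightarrow> ('a \<Rightarrow> nat) \<Rightarrow> 'a set \<Rightarrow> bool" where
  "is_dynamo V E \<tau> D \<longleftrightarrow> D \<subseteq> V \<and> (\<exists>k. (activate V E \<tau> ^^ k) D = V)"

definition dyn :: "'a set \<Rightarrow> ('a \<Rightarrow> 'a \<Rightarrow> bool) \<Rightarrow> ('a \<Rightarrow> nat) \<Rightarrow> nat" where
  "dyn V E \<tau> = Min {card D | D. is_dynamo V E \<tau> D}"

definition Ldyn :: "'a set \<Rightarrow> ('a \<Rightarrow> 'a \<Rightarrow> bool) \<Rightarrow> real \<Rightarrow> nat" where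
  "Ldyn V E t = Max {dyn V E \<tau> | \<tau>. threshold V E \<tau> \<and> avg_thr V \<tau> \<le> t}"

end

theory Submission
  imports Defs
begin

definition KE :: "nat \<Rightarrow> nat \<Rightarrow> nat \<Rightarrow> bool" where
  "KE n u v \<longleftrightarrow> u < n + 2 \<and> v < n + 2 \<and> u \<noteq> v"

definition KT :: "nat \<Rightarrow> nat \<Rightarrow> nat" where
  "KT n v = n + 1"

lemma K_simple: "simple_graph {0..<n+2} (KE n)"
  by (auto simp: simple_graph_def KE_def)

lemma K_degree: "v \<in> {0..<n+2} \<Longrightarrow> degree {0..<n+2} (KE n) v = n + 1"
proof -
  assume v: "v \<in> {0..<n+2}"
  have "{u \<in> {0..<n+2}. KE n v u} = {0..<n+2} - {v}" using v by (auto simp: KE_def)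
  thus ?thesis using v by (simp add: degree_def)
qed

lemma K_threshold: "threshold {0..<n+2} (KE n) (KT n)"
  using K_degree[of _ n] by (auto simp: threshold_def KT_def)

lemma K_avg: "avg_thr {0..<n+2} (KT n) = real (n + 1)"
proof -
  have s: "(\<Sum>v\<in>{0..<n+2}. KT n v) = (n+2)*(n+1)" by (simp add: KT_def)
  have "real ((n+2)*(n+1)) / real (n+2) = real (n+1)" by (simp only: of_nat_mult) simp
  thus ?thesis unfolding avg_thr_def s by simp
qed

lemma K_act: "A \<subseteq> {0..<n+2} \<Longrightarrow> card A \<le> n \<Longrightarrow> activate {0..<n+2} (KE n) (KT n) A = A"
proof -
  assume A: "A \<subseteq> {0..<n+2}" and c: "card A \<le> n"
  have "{v \<in> {0..<n+2} - A. card {u \<in> A. KE n v u} \<ge> KT n v} = {}"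
  proof (rule ccontr)
    assume "\<not> ?thesis"
    then obtain v where v: "v \<in> {0..<n+2} - A" "card {u \<in> A. KE n v u} \<ge> n + 1"
      by (auto simp: KT_def)
    have "{u \<in> A. KE n v u} = A" using A v(1) by (auto simp: KE_def)
    thus False using v c by simp
  qed
  thus ?thesis unfolding activate_def by blast
qed

lemma K_dyn_lower: "is_dynamo {0..<n+2} (KE n) (KT n) D \<Longrightarrow> card D \<ge> n + 1"
proof (rule ccontr)
  assume d: "is_dynamo {0..<n+2} (KE n) (KT n) D" and "\<not> card D \<ge> n + 1"
  hence c: "card D \<le> n" by simp
  from d obtain k where D: "D \<subseteq> {0..<n+2}" and k: "(activate {0..<n+2} (KE n) (KT n) ^^ k) D = {0..<n+2}"
    by (auto simp: is_dynamo_def)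
  have "(activate {0..<n+2} (KE n) (KT n) ^^ k) D = D" for k
    by (induction k) (simp_all add: K_act[OF D c, simplified])
  with k have "D = {0..<n+2}" by simp
  thus False using c by simp
qed

lemma dyn_le: "finite V \<Longrightarrow> dyn V E t \<le> card V"
proof -
  assume f: "finite V"
  have "is_dynamo V E t V" unfolding is_dynamo_def by (rule conjI, simp, rule exI[of _ 0], simp)
  hence mem: "card V \<in> {card D | D. is_dynamo V E t D}" by blast
  have fin: "finite {card D | D. is_dynamo V E t D}"
  proof (rule finite_subset[of _ "{..card V}"])
    show "{card D | D. is_dynamo V E t D} \<subseteq> {..card V}"
      using f by (auto simp: is_dynamo_def intro: card_mono)
  qed simp
  show ?thesis unfolding dyn_def using Min_le[OF fin mem] .
qed

lemma K_dyn: "dyn {0..<n+2} (KE n) (KT n) \<ge> n + 1"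
proof -
  have "is_dynamo {0..<n+2} (KE n) (KT n) {0..<n+2}" unfolding is_dynamo_def
    by (rule conjI, simp, rule exI[of _ 0], simp)
  hence ne: "{card D | D. is_dynamo {0..<n+2} (KE n) (KT n) D} \<noteq> {}" by blast
  have fin: "finite {card D | D. is_dynamo {0..<n+2} (KE n) (KT n) D}"
  proof (rule finite_subset[of _ "{..n+2}"])
    show "{card D | D. is_dynamo {0..<n+2} (KE n) (KT n) D} \<subseteq> {..n+2}"
      by (auto simp: is_dynamo_def dest: card_mono[rotated])
  qed simp
  show ?thesis unfolding dyn_def using ne fin K_dyn_lower by (auto simp: Min_ge_iff)
qed

lemma K_Ldyn: "n + 1 \<le> Ldyn {0..<n+2} (KE n) (real (n+1)) \<and> Ldyn {0..<n+2} (KE n) (real (n+1)) \<le> n + 2"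
proof -
  let ?S = "{dyn {0..<n+2} (KE n) \<tau> | \<tau>. threshold {0..<n+2} (KE n) \<tau> \<and> avg_thr {0..<n+2} \<tau> \<le> real (n+1)}"
  have mem: "dyn {0..<n+2} (KE n) (KT n) \<in> ?S" using K_threshold K_avg by force
  have sub: "?S \<subseteq> {..n+2}" using dyn_le[of "{0..<n+2}"] by fastforce
  hence fin: "finite ?S" by (rule finite_subset) simp
  have "n + 1 \<le> Max ?S" using le_trans[OF K_dyn[of n] Max_ge[OF fin mem]] .
  moreover have "Max ?S \<le> n + 2" using mem fin sub by (intro Max.boundedI) auto
  ultimately show ?thesis by (simp add: Ldyn_def)
qed

lemma K_edges: "card (edge_set {0..<n+2} (KE n)) \<le> (n+2) * (n+2)"
proof -
  have "edge_set {0..<n+2} (KE n) \<subseteq> (\<lambda>(u,v). {u,v}) ` ({0..<n+2} \<times> {0..<n+2})"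
    by (auto simp: edge_set_def KE_def)
  hence "card (edge_set {0..<n+2} (KE n)) \<le> card ((\<lambda>(u,v). {u,v}) ` ({0..<n+2} \<times> {0..<(n::nat)+2}))"
    by (intro card_mono) auto
  also have "\<dots> \<le> card ({0..<n+2} \<times> {0..<(n::nat)+2})" by (rule card_image_le) simp
  finally show ?thesis by simp
qed

lemma K_eps: "eps {0..<n+2} (KE n) / real (n+2) \<le> 1"
proof -
  have "real (card (edge_set {0..<n+2} (KE n))) \<le> real (n+2) * real (n+2)"
    using K_edges[of n] by (metis of_nat_le_iff of_nat_mult)
  hence "real (card (edge_set {0..<n+2} (KE n))) / (real (n+2) * real (n+2)) \<le> 1"
    by (simp add: divide_le_eq_1)
  thus ?thesis by (simp add: eps_def)
qed

theorem proposition3: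
  shows "\<exists>(N :: nat \<Rightarrow> nat) (E :: nat \<Rightarrow> nat \<Rightarrow> nat \<Rightarrow> bool) (\<tau> :: nat \<Rightarrow> nat \<Rightarrow> nat).
    (\<forall>n. simple_graph {0..<N n} (E n) \<and> threshold {0..<N n} (E n) (\<tau> n)) \<and>
    filterlim N at_top sequentially \<and>
    (\<lambda>n. eps {0..<N n} (E n) / real (N n)) \<in> o[sequentially](\<lambda>n. avg_thr {0..<N n} (\<tau> n)) \<and>
    (\<lambda>n. real (Ldyn {0..<N n} (E n) (avg_thr {0..<N n} (\<tau> n))) / real (N n)) \<longlonglongrightarrow> 1"
proof (intro exI conjI allI)
  let ?N = "\<lambda>n::nat. n + 2"
  show "simple_graph {0..<?N n} (KE n)" for n by (rule K_simple)
  show "threshold {0..<?N n} (KE n) (KT n)" for n by (rule K_threshold)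
  show "filterlim ?N at_top sequentially" by (rule filterlim_add_const_nat_at_top)
  show "(\<lambda>n. eps {0..<?N n} (KE n) / real (?N n)) \<in> o[sequentially](\<lambda>n. avg_thr {0..<?N n} (KT n))"
  proof (rule landau_o.smallI)
    fix c :: real assume c: "c > 0"
    obtain M :: nat where M: "1 / c < M" using reals_Archimedean2 by blast
    show "eventually (\<lambda>n. norm (eps {0..<?N n} (KE n) / real (?N n)) \<le> c * norm (avg_thr {0..<?N n} (KT n))) sequentially"
    proof (rule eventually_sequentiallyI[of M])
      fix n assume n: "M \<le> n"
      have e0: "0 \<le> eps {0..<?N n} (KE n) / real (?N n)" by (simp add: eps_def)
      have "1 \<le> c * real (n+1)"
      proof -
        have "1 / c < real (n+1)" using M n by linarith
        thus ?thesis using c by (simp add: field_simps)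
      qed
      moreover have "norm (eps {0..<?N n} (KE n) / real (?N n)) \<le> 1"
        using K_eps[of n] e0 by (simp only: real_norm_def abs_of_nonneg)
      moreover have "norm (avg_thr {0..<?N n} (KT n)) = real (n+1)"
        by (simp only: K_avg real_norm_def abs_of_nat)
      ultimately show "norm (eps {0..<?N n} (KE n) / real (?N n)) \<le> c * norm (avg_thr {0..<?N n} (KT n))"
        by (metis order_trans)
    qed
  qed
  show "(\<lambda>n. real (Ldyn {0..<?N n} (KE n) (avg_thr {0..<?N n} (KT n))) / real (?N n)) \<longlonglongrightarrow> 1"
  proof (rule real_tendsto_sandwich[of "\<lambda>n. real (n+1) / real (n+2)" _ _ "\<lambda>_. 1"])
    show "eventually (\<lambda>n. real (n+1) / real (n+2) \<le> real (Ldyn {0..<?N n} (KE n) (avg_thr {0..<?N n} (KT n))) / real (?N n)) sequentially"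
    proof (intro always_eventually allI)
      fix n
      have "real (n+1) \<le> real (Ldyn {0..<?N n} (KE n) (avg_thr {0..<?N n} (KT n)))"
        using K_Ldyn[of n] unfolding K_avg by simp
      thus "real (n+1) / real (n+2) \<le> real (Ldyn {0..<?N n} (KE n) (avg_thr {0..<?N n} (KT n))) / real (?N n)"
        by (intro divide_right_mono) auto
    qed
    show "eventually (\<lambda>n. real (Ldyn {0..<?N n} (KE n) (avg_thr {0..<?N n} (KT n))) / real (?N n) \<le> 1) sequentially"
    proof (intro always_eventually allI)
      fix n
      have "real (Ldyn {0..<?N n} (KE n) (avg_thr {0..<?N n} (KT n))) \<le> real (n+2)"
        using K_Ldyn[of n] unfolding K_avg by simp
      thus "real (Ldyn {0..<?N n} (KE n) (avg_thr {0..<?N n} (KT n))) / real (?N n) \<le> 1"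
        by simp
    qed
    show "(\<lambda>_. 1::real) \<longlonglongrightarrow> 1" by simp
    show "(\<lambda>n. real (n+1) / real (n+2)) \<longlonglongrightarrow> 1"
    proof -
      have "(\<lambda>n. 1 - 1 / real (n+2)) \<longlonglongrightarrow> 1 - 0"
        by (intro tendsto_diff tendsto_const) (rule LIMSEQ_ignore_initial_segment[OF lim_1_over_n, of 2, simplified add.commute])
      moreover have "1 - 1 / real (n+2) = real (n+1) / real (n+2)" for n by (simp add: field_simps)
      ultimately show ?thesis by simp
    qed
  qed
qed

end
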